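(* Let $X$ be a transitive BE-algebra, $k\in(-0.5,0]$, and $(X,f)$ an $([e],[e]\vee[c_k])$-ideal of $X$. For $t\in[-1,0)$ let $Q(f;t)=\{x\in X: f(x)+t+k+1<0\}$. Then for every $t\in[-1,\tfrac{-k-1}{2})$, the set $Q(f;t)$ is either empty or an ideal of $X$.
   Context: A BE-algebra is a set $X$ with a binary operation $*$ and a distinguished element $1$ such that for all $x,y,z\in X$: $x*x=1$, $x*1=1$, $1*x=x$, and $x*(y*z)=y*(x*z)$. Write $x\le y$ iff $x*y=1$. A BE-algebra is transitive if $y*z\le(x*y)*(x*z)$ for all $x,y,z\in X$. An ideal of $X$ is a nonempty subset $I\subseteq X$ such that $x*s\in I$ for all $x\in X$, $s\in I$, and $(s*(q*x))*x\in I$ for all $x\in X$ and $s,q\in I$. An $N$-structure on $X$ is a pair $(X,f)$ where $f:X\to[-1,0]$ is any function. Fix $k\in(-1,0]$. For $x\in X$ and $t\in[-1,0)$, write $\frac{x}{t}[e]f$ if $f(x)\le t$, and $\frac{x}{t}[c_k]f$ if $f(x)+t+k+1<0$; write $\frac{x}{t}([e]\vee[c_k])f$ if at least one of these holds. The $N$-structure $(X,f)$ is an $([e],[e]\vee[c_k])$-ideal of $X$ if for all $x,y,z\in X$ and all $t,r\in[-1,0)$: (i) $f(y)\le t$ implies $\frac{x*y}{t}([e]\vee[c_k])f$; (ii) $f(x)\le t$ and $f(y)\le r$ together imply $\frac{(x*(y*z))*z}{\max\{t,r\}}([e]\vee[c_k])f$. *)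

theory Defs
  imports Complex_Main
begin

definition BE_algebra :: "'a set \<Rightarrow> ('a \<Rightarrow> 'a \<Rightarrow> 'a) \<Rightarrow> 'a \<Rightarrow> bool" where
  "BE_algebra X m one \<longleftrightarrow>
     one \<in> X \<and> (\<forall>x\<in>X. \<forall>y\<in>X. m x y \<in> X) \<and>
     (\<forall>x\<in>X. m x x = one) \<and> (\<forall>x\<in>X. m x one = one) \<and> (\<forall>x\<in>X. m one x = x) \<and>
     (\<forall>x\<in>X. \<forall>y\<in>X. \<forall>z\<in>X. m x (m y z) = m y (m x z))"

definition BE_le :: "('a \<Rightarrow> 'a \<Rightarrow> 'a) \<Rightarrow> 'a \<Rightarrow> 'a \<Rightarrow> 'a \<Rightarrow> bool" where
  "BE_le m one x y \<longleftrightarrow> m x y = one"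

definition transitive_BE :: "'a set \<Rightarrow> ('a \<Rightarrow> 'a \<Rightarrow> 'a) \<Rightarrow> 'a \<Rightarrow> bool" where
  "transitive_BE X m one \<longleftrightarrow> BE_algebra X m one \<and>
     (\<forall>x\<in>X. \<forall>y\<in>X. \<forall>z\<in>X. BE_le m one (m y z) (m (m x y) (m x z)))"

definition BE_ideal :: "'a set \<Rightarrow> ('a \<Rightarrow> 'a \<Rightarrow> 'a) \<Rightarrow> 'a set \<Rightarrow> bool" where
  "BE_ideal X m I \<longleftrightarrow> I \<noteq> {} \<and> I \<subseteq> X \<and>
     (\<forall>x\<in>X. \<forall>s\<in>I. m x s \<in> I) \<and>
     (\<forall>x\<in>X. \<forall>s\<in>I. \<forall>q\<in>I. m (m s (m q x)) x \<in> I)"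

definition N_structure :: "'a set \<Rightarrow> ('a \<Rightarrow> real) \<Rightarrow> bool" where
  "N_structure X f \<longleftrightarrow> (\<forall>x\<in>X. -1 \<le> f x \<and> f x \<le> 0)"

definition N_e :: "('a \<Rightarrow> real) \<Rightarrow> 'a \<Rightarrow> real \<Rightarrow> bool" where
  "N_e f x t \<longleftrightarrow> f x \<le> t"

definition N_ck :: "real \<Rightarrow> ('a \<Rightarrow> real) \<Rightarrow> 'a \<Rightarrow> real \<Rightarrow> bool" where
  "N_ck k f x t \<longleftrightarrow> f x + t + k + 1 < 0"

definition N_e_or_ck :: "real \<Rightarrow> ('a \<Rightarrow> real) \<Rightarrow> 'a \<Rightarrow> real \<Rightarrow> bool" where
  "N_e_or_ck k f x t \<longleftrightarrow> N_e f x t \<or> N_ck k f x t"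

definition e_eck_ideal :: "'a set \<Rightarrow> ('a \<Rightarrow> 'a \<Rightarrow> 'a) \<Rightarrow> real \<Rightarrow> ('a \<Rightarrow> real) \<Rightarrow> bool" where
  "e_eck_ideal X m k f \<longleftrightarrow> N_structure X f \<and>
     (\<forall>x\<in>X. \<forall>y\<in>X. \<forall>t\<in>{-1..<0}. f y \<le> t \<longrightarrow> N_e_or_ck k f (m x y) t) \<and>
     (\<forall>x\<in>X. \<forall>y\<in>X. \<forall>z\<in>X. \<forall>t\<in>{-1..<0}. \<forall>r\<in>{-1..<0}.
        f x \<le> t \<and> f y \<le> r \<longrightarrow> N_e_or_ck k f (m (m x (m y z)) z) (max t r))"

definition Qset :: "'a set \<Rightarrow> real \<Rightarrow> ('a \<Rightarrow> real) \<Rightarrow> real \<Rightarrow> 'a set" where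
  "Qset X k f t = {x\<in>X. f x + t + k + 1 < 0}"

end

theory Submission
  imports Defs
begin

theorem mainTheorem11:
  fixes X :: "'a set" and m :: "'a \<Rightarrow> 'a \<Rightarrow> 'a" and one :: 'a
    and f :: "'a \<Rightarrow> real" and k t :: real
  assumes "transitive_BE X m one"
    and "-1/2 < k" and "k \<le> 0"
    and "e_eck_ideal X m k f"
    and "-1 \<le> t" and "t < (-k - 1) / 2"
  shows "Qset X k f t = {} \<or> BE_ideal X m (Qset X k f t)"
proof -
  define u where "u = -t-k-1"
  have cl: "\<forall>x\<in>X. \<forall>y\<in>X. m x y \<in> X" using assms(1)
    unfolding transitive_BE_def BE_algebra_def by blast
  have ns: "\<forall>x\<in>X. -1 \<le> f x \<and> f x \<le> 0" using assms(4)
    unfolding e_eck_ideal_def N_structure_def by blast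
  have c1: "\<forall>x\<in>X. \<forall>y\<in>X. \<forall>t\<in>{-1..<0}. f y \<le> t \<longrightarrow> N_e_or_ck k f (m x y) t"
    using assms(4) unfolding e_eck_ideal_def by blast
  have c2: "\<forall>x\<in>X. \<forall>y\<in>X. \<forall>z\<in>X. \<forall>t\<in>{-1..<0}. \<forall>r\<in>{-1..<0}.
        f x \<le> t \<and> f y \<le> r \<longrightarrow> N_e_or_ck k f (m (m x (m y z)) z) (max t r)"
    using assms(4) unfolding e_eck_ideal_def by blast
  have tu: "t < u" using assms unfolding u_def by simp
  have tneg: "t < 0" using assms by simp
  have Q: "\<And>x. x \<in> Qset X k f t \<longleftrightarrow> x \<in> X \<and> f x < u" unfolding Qset_def u_def by auto
  show ?thesis
  proof (cases "u > 0")
    case True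
    then have "Qset X k f t = X" using Q ns by force
    moreover have "X \<noteq> {}" using assms(1) unfolding transitive_BE_def BE_algebra_def by blast
    ultimately show ?thesis using cl unfolding BE_ideal_def by auto
  next
    case False
    have key: "\<And>z \<tau>. z \<in> X \<Longrightarrow> \<tau> \<in> {-1..<0} \<Longrightarrow> t \<le> \<tau> \<Longrightarrow> \<tau> < u \<Longrightarrow>
        N_e_or_ck k f z \<tau> \<Longrightarrow> z \<in> Qset X k f t"
      unfolding Q N_e_or_ck_def N_e_def N_ck_def u_def by auto
    have thr: "\<And>s. s \<in> Qset X k f t \<Longrightarrow> max (f s) t \<in> {-1..<0} \<and> t \<le> max (f s) t
        \<and> max (f s) t < u \<and> f s \<le> max (f s) t"
      using Q False tu tneg assms(5) by auto
    show ?thesis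
    proof (cases "Qset X k f t = {}")
      case False
      have "\<forall>x\<in>X. \<forall>s\<in>Qset X k f t. m x s \<in> Qset X k f t"
      proof (intro ballI)
        fix x s assume x: "x \<in> X" and s: "s \<in> Qset X k f t"
        have sX: "s \<in> X" using s Q by auto
        show "m x s \<in> Qset X k f t"
          apply (rule key[of _ "max (f s) t"])
          using cl x sX thr[OF s] c1 by auto
      qed
      moreover have "\<forall>x\<in>X. \<forall>s\<in>Qset X k f t. \<forall>q\<in>Qset X k f t. m (m s (m q x)) x \<in> Qset X k f t"
      proof (intro ballI)
        fix x s q assume x: "x \<in> X" and s: "s \<in> Qset X k f t" and q: "q \<in> Qset X k f t"
        have sX: "s \<in> X" and qX: "q \<in> X" using s q Q by auto
        have "N_e_or_ck k f (m (m s (m q x)) x) (max (max (f s) t) (max (f q) t))"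
          using c2 x sX qX thr[OF s] thr[OF q] by blast
        then show "m (m s (m q x)) x \<in> Qset X k f t"
          apply (rule key[rotated 4])
          using cl x sX qX thr[OF s] thr[OF q] by (auto simp: max_def)
      qed
      moreover have "Qset X k f t \<subseteq> X" using Q by auto
      ultimately show ?thesis using False unfolding BE_ideal_def by auto
    qed simp
  qed
qed

end
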